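(* For states $\mu,\nu:I\to X$ the relation $\mu\ll\nu$ is characterized as follows: (1) in $\mathrm{FinStoch}$, $\mu\ll\nu$ iff $\nu(x)=0$ implies $\mu(x)=0$ for all $x$; (2) in $\mathrm{BorelStoch}$, $\mu\ll\nu$ iff for all measurable $A$, $\nu(A)=0$ implies $\mu(A)=0$; (3) in $\mathrm{Gauss}$, $\mu\ll\nu$ iff $\mathrm{supp}(\mu)\subseteq\mathrm{supp}(\nu)$; (4) in $\mathrm{Rel}^+$, $R\ll S$ iff $R\subseteq S$.
   Context: A Markov category is a symmetric monoidal category with a compatible commutative comonoid $\mathrm{copy}_X:X\to X\otimes X$, $\mathrm{del}_X:X\to I$ on every object, with $I$ terminal. $\langle f,g\rangle=(f\otimes g)\mathrm{copy}_A$. For a state $\mu:I\to X$ and $f,g:X\to Y$, $f=_\mu g$ means $\langle\mathrm{id}_X,f\rangle\mu=\langle\mathrm{id}_X,g\rangle\mu$; $\mu\ll\nu$ means: for all $Y$ and all $f,g:X\to Y$, $f=_\nu g$ implies $f=_\mu g$. $\mathrm{FinStoch}$: finite sets with stochastic matrices, composition $(pq)(z|x)=\sum_y p(z|y)q(y|x)$, tensor cartesian product. $\mathrm{BorelStoch}$: standard Borel spaces and Markov kernels. $\mathrm{Gauss}$: objects $n\in\mathbb N$ (representing $\mathbb R^n$), $m\otimes n=m+n$; morphisms $m\to n$ are triples $(A,b,\Sigma)$ with $A\in\mathbb R^{n\times m}$, $b\in\mathbb R^n$, $\Sigma$ positive semidefinite $n\times n$ (representing $x\mapsto Ax+b+\mathcal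 N(0,\Sigma)$); $(A,b,\Sigma)\circ(C,d,\Xi)=(AC,Ad+b,A\Xi A^T+\Sigma)$; tensor block diagonal; copy $x\mapsto(x,x)$. A state $0\to n$ is a Gaussian $\mathcal N(b,\Sigma)$, whose support is the affine subspace $\mathrm{supp}=b+\mathrm{col}(\Sigma)$. $\mathrm{Rel}^+$: sets and left-total relations; states $I\to X$ are nonempty subsets of $X$. *)

theory Defs
  imports "HOL-Probability.Probability" "Jordan_Normal_Form.Matrix"
begin

text \<open>A morphism X -> Y of FinStoch (X, Y finite sets) is a stochastic matrix,
  represented as f :: 'a => 'b => real with f x y = p(y|x); only its values on
  X x Y are meaningful. States I -> X are morphisms from the one-point set {()}.\<close>

definition fs_morph :: "'a set \<Rightarrow> 'b set \<Rightarrow> ('a \<Rightarrow> 'b \<Rightarrow> real) \<Rightarrow> bool" where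
  "fs_morph X Y f \<longleftrightarrow> (\<forall>x\<in>X. \<forall>y\<in>Y. 0 \<le> f x y) \<and> (\<forall>x\<in>X. (\<Sum>y\<in>Y. f x y) = 1)"

definition fs_comp :: "'b set \<Rightarrow> ('b \<Rightarrow> 'c \<Rightarrow> real) \<Rightarrow> ('a \<Rightarrow> 'b \<Rightarrow> real) \<Rightarrow> ('a \<Rightarrow> 'c \<Rightarrow> real)" where
  "fs_comp Y g f = (\<lambda>x z. \<Sum>y\<in>Y. g y z * f x y)"

definition fs_tensor :: "('a \<Rightarrow> 'b \<Rightarrow> real) \<Rightarrow> ('c \<Rightarrow> 'd \<Rightarrow> real) \<Rightarrow> ('a \<times> 'c \<Rightarrow> 'b \<times> 'd \<Rightarrow> real)" where
  "fs_tensor f g = (\<lambda>(x, x') (y, y'). f x y * g x' y')"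

definition fs_id :: "'a \<Rightarrow> 'a \<Rightarrow> real" where
  "fs_id = (\<lambda>x y. if x = y then 1 else 0)"

definition fs_copy :: "'a \<Rightarrow> 'a \<times> 'a \<Rightarrow> real" where
  "fs_copy = (\<lambda>x (y1, y2). if y1 = x \<and> y2 = x then 1 else 0)"

definition fs_pair :: "'a set \<Rightarrow> ('a \<Rightarrow> 'b \<Rightarrow> real) \<Rightarrow> ('a \<Rightarrow> 'c \<Rightarrow> real) \<Rightarrow> ('a \<Rightarrow> 'b \<times> 'c \<Rightarrow> real)" where
  "fs_pair A f g = fs_comp (A \<times> A) (fs_tensor f g) fs_copy"

definition fs_ae_eq :: "'a set \<Rightarrow> 'b set \<Rightarrow> (unit \<Rightarrow> 'a \<Rightarrow> real) \<Rightarrow> ('a \<Rightarrow> 'b \<Rightarrow> real) \<Rightarrow> ('a \<Rightarrow> 'b \<Rightarrow> real) \<Rightarrow> bool" where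
  "fs_ae_eq X Y \<mu> f g \<longleftrightarrow>
     (\<forall>u\<in>{()}. \<forall>p\<in>X \<times> Y. fs_comp X (fs_pair X fs_id f) \<mu> u p = fs_comp X (fs_pair X fs_id g) \<mu> u p)"

text \<open>mu << nu. Objects Y range over finite subsets of nat (every finite set is
  isomorphic to one of these).\<close>
definition fs_ac :: "'a set \<Rightarrow> (unit \<Rightarrow> 'a \<Rightarrow> real) \<Rightarrow> (unit \<Rightarrow> 'a \<Rightarrow> real) \<Rightarrow> bool" where
  "fs_ac X \<mu> \<nu> \<longleftrightarrow> (\<forall>Y::nat set. finite Y \<longrightarrow> (\<forall>f g. fs_morph X Y f \<longrightarrow> fs_morph X Y g \<longrightarrow>
       fs_ae_eq X Y \<nu> f g \<longrightarrow> fs_ae_eq X Y \<mu> f g))"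

definition standard_borel :: "'a measure \<Rightarrow> bool" where
  "standard_borel M \<longleftrightarrow> (\<exists>T. completely_metrizable_space T \<and> separable_space T \<and>
      topspace T = space M \<and> sets M = sigma_sets (space M) {U. openin T U})"

definition bs_morph :: "'a measure \<Rightarrow> 'b measure \<Rightarrow> ('a \<Rightarrow> 'b measure) \<Rightarrow> bool" where
  "bs_morph X Y f \<longleftrightarrow> f \<in> X \<rightarrow>\<^sub>M prob_algebra Y"

definition bs_state :: "'a measure \<Rightarrow> 'a measure \<Rightarrow> bool" where
  "bs_state X \<mu> \<longleftrightarrow> \<mu> \<in> space (prob_algebra X)"

definition bs_comp :: "('b \<Rightarrow> 'c measure) \<Rightarrow> ('a \<Rightarrow> 'b measure) \<Rightarrow> ('a \<Rightarrow> 'c measure)" where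
  "bs_comp g f = (\<lambda>x. f x \<bind> g)"

definition bs_tensor :: "('a \<Rightarrow> 'b measure) \<Rightarrow> ('c \<Rightarrow> 'd measure) \<Rightarrow> ('a \<times> 'c \<Rightarrow> ('b \<times> 'd) measure)" where
  "bs_tensor f g = (\<lambda>(x, x'). f x \<Otimes>\<^sub>M g x')"

definition bs_id :: "'a measure \<Rightarrow> 'a \<Rightarrow> 'a measure" where
  "bs_id X = return X"

definition bs_copy :: "'a measure \<Rightarrow> 'a \<Rightarrow> ('a \<times> 'a) measure" where
  "bs_copy X = (\<lambda>x. return (X \<Otimes>\<^sub>M X) (x, x))"

definition bs_pair :: "'a measure \<Rightarrow> ('a \<Rightarrow> 'b measure) \<Rightarrow> ('a \<Rightarrow> 'c measure) \<Rightarrow> ('a \<Rightarrow> ('b \<times> 'c) measure)" where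
  "bs_pair A f g = bs_comp (bs_tensor f g) (bs_copy A)"

definition bs_ae_eq :: "'a measure \<Rightarrow> 'a measure \<Rightarrow> ('a \<Rightarrow> 'b measure) \<Rightarrow> ('a \<Rightarrow> 'b measure) \<Rightarrow> bool" where
  "bs_ae_eq X \<mu> f g \<longleftrightarrow> (\<mu> \<bind> bs_pair X (bs_id X) f) = (\<mu> \<bind> bs_pair X (bs_id X) g)"

text \<open>Objects Y range over standard Borel spaces carried by subsets of the reals
  (every standard Borel space is isomorphic to one of these).\<close>
definition bs_ac :: "'a measure \<Rightarrow> 'a measure \<Rightarrow> 'a measure \<Rightarrow> bool" where
  "bs_ac X \<mu> \<nu> \<longleftrightarrow> (\<forall>Y::real measure. standard_borel Y \<longrightarrow> (\<forall>f g. bs_morph X Y f \<longrightarrow> bs_morph X Y g \<longrightarrow>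
       bs_ae_eq X \<nu> f g \<longrightarrow> bs_ae_eq X \<mu> f g))"

type_synonym gmor = "real mat \<times> real vec \<times> real mat"

definition psd_mat :: "nat \<Rightarrow> real mat \<Rightarrow> bool" where
  "psd_mat n S \<longleftrightarrow> S \<in> carrier_mat n n \<and> transpose_mat S = S \<and>
     (\<forall>v\<in>carrier_vec n. 0 \<le> v \<bullet> (S *\<^sub>v v))"

text \<open>(A,b,Sigma) : m -> n, representing x |-> A x + b + N(0,Sigma)\<close>
definition g_morph :: "nat \<Rightarrow> nat \<Rightarrow> gmor \<Rightarrow> bool" where
  "g_morph m n f \<longleftrightarrow> (case f of (A, b, S) \<Rightarrow> A \<in> carrier_mat n m \<and> b \<in> carrier_vec n \<and> psd_mat n S)"

definition g_comp :: "gmor \<Rightarrow> gmor \<Rightarrow> gmor" where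
  "g_comp f g = (case f of (A, b, S) \<Rightarrow> case g of (C, d, X) \<Rightarrow>
     (A * C, A *\<^sub>v d + b, A * X * transpose_mat A + S))"

definition g_tensor :: "nat \<Rightarrow> nat \<Rightarrow> nat \<Rightarrow> nat \<Rightarrow> gmor \<Rightarrow> gmor \<Rightarrow> gmor" where
  "g_tensor m n m' n' f g = (case f of (A, b, S) \<Rightarrow> case g of (A', b', S') \<Rightarrow>
     (four_block_mat A (0\<^sub>m n m') (0\<^sub>m n' m) A', b @\<^sub>v b', four_block_mat S (0\<^sub>m n n') (0\<^sub>m n' n) S'))"

definition g_id :: "nat \<Rightarrow> gmor" where
  "g_id n = (1\<^sub>m n, 0\<^sub>v n, 0\<^sub>m n n)"

definition g_copy :: "nat \<Rightarrow> gmor" where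
  "g_copy n = (mat (n + n) n (\<lambda>(i, j). if i = j \<or> i = j + n then 1 else 0), 0\<^sub>v (n + n), 0\<^sub>m (n + n) (n + n))"

definition g_pair :: "nat \<Rightarrow> nat \<Rightarrow> nat \<Rightarrow> gmor \<Rightarrow> gmor \<Rightarrow> gmor" where
  "g_pair a n n' f g = g_comp (g_tensor a n a n' f g) (g_copy a)"

definition g_ae_eq :: "nat \<Rightarrow> nat \<Rightarrow> gmor \<Rightarrow> gmor \<Rightarrow> gmor \<Rightarrow> bool" where
  "g_ae_eq x y \<mu> f g \<longleftrightarrow> g_comp (g_pair x x y (g_id x) f) \<mu> = g_comp (g_pair x x y (g_id x) g) \<mu>"

definition g_ac :: "nat \<Rightarrow> gmor \<Rightarrow> gmor \<Rightarrow> bool" where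
  "g_ac x \<mu> \<nu> \<longleftrightarrow> (\<forall>y f g. g_morph x y f \<longrightarrow> g_morph x y g \<longrightarrow> g_ae_eq x y \<nu> f g \<longrightarrow> g_ae_eq x y \<mu> f g)"

definition g_supp :: "nat \<Rightarrow> gmor \<Rightarrow> real vec set" where
  "g_supp n \<mu> = (case \<mu> of (A, b, S) \<Rightarrow> {b + S *\<^sub>v v | v. v \<in> carrier_vec n})"

definition rp_morph :: "'a set \<Rightarrow> 'b set \<Rightarrow> ('a \<times> 'b) set \<Rightarrow> bool" where
  "rp_morph X Y R \<longleftrightarrow> R \<subseteq> X \<times> Y \<and> (\<forall>x\<in>X. \<exists>y. (x, y) \<in> R)"

text \<open>states I -> X are nonempty subsets of X; as relations {()} -> X\<close>
definition rp_state_rel :: "'a set \<Rightarrow> (unit \<times> 'a) set" where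
  "rp_state_rel S = {()} \<times> S"

text \<open>g o f is relational composition f O g\<close>
definition rp_tensor :: "('a \<times> 'b) set \<Rightarrow> ('c \<times> 'd) set \<Rightarrow> (('a \<times> 'c) \<times> ('b \<times> 'd)) set" where
  "rp_tensor R S = {((x, x'), (y, y')) | x x' y y'. (x, y) \<in> R \<and> (x', y') \<in> S}"

definition rp_copy :: "'a set \<Rightarrow> ('a \<times> ('a \<times> 'a)) set" where
  "rp_copy X = {(x, (x, x)) | x. x \<in> X}"

definition rp_pair :: "'a set \<Rightarrow> ('a \<times> 'b) set \<Rightarrow> ('a \<times> 'c) set \<Rightarrow> ('a \<times> ('b \<times> 'c)) set" where
  "rp_pair A R S = rp_copy A O rp_tensor R S"

definition rp_ae_eq :: "'a set \<Rightarrow> 'a set \<Rightarrow> ('a \<times> 'b) set \<Rightarrow> ('a \<times> 'b) set \<Rightarrow> bool" where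
  "rp_ae_eq X M R S \<longleftrightarrow> rp_state_rel M O rp_pair X (Id_on X) R = rp_state_rel M O rp_pair X (Id_on X) S"

text \<open>Objects Y range over subsets of the same universe type as X.\<close>
definition rp_ac :: "'a set \<Rightarrow> 'a set \<Rightarrow> 'a set \<Rightarrow> bool" where
  "rp_ac X M N \<longleftrightarrow> (\<forall>Y::'a set. \<forall>R S. rp_morph X Y R \<longrightarrow> rp_morph X Y S \<longrightarrow>
       rp_ae_eq X N R S \<longrightarrow> rp_ae_eq X M R S)"

end

theory Submission
  imports Defs
begin

lemma rp_ae_eq_iff:
  assumes "M \<subseteq> X"
  shows "rp_ae_eq X M R S \<longleftrightarrow> (\<forall>x\<in>M. \<forall>y. (x,y)\<in>R \<longleftrightarrow> (x,y)\<in>S)"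
proof -
  have e: "rp_state_rel M O rp_pair X (Id_on X) T = {((),(x,y)) | x y. x \<in> M \<and> (x,y) \<in> T}" for T :: "('a \<times> 'b) set"
    using assms unfolding rp_state_rel_def rp_pair_def rp_copy_def rp_tensor_def by (auto simp: relcomp_unfold)
  show ?thesis unfolding rp_ae_eq_def e by blast
qed

lemma part_rp:
  fixes X :: "'c set"
  assumes "R \<noteq> {}" "R \<subseteq> X" "S \<noteq> {}" "S \<subseteq> X"
  shows "rp_ac X R S \<longleftrightarrow> R \<subseteq> S"
proof
  assume "R \<subseteq> S" then show "rp_ac X R S"
    unfolding rp_ac_def using assms by (simp add: rp_ae_eq_iff) blast
next
  assume ac: "rp_ac X R S"
  show "R \<subseteq> S"
  proof (rule ccontr)
    assume "\<not> R \<subseteq> S"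
    then obtain m where m: "m \<in> R" "m \<notin> S" by blast
    obtain s where s: "s \<in> S" using assms by blast
    let ?R = "Id_on X" and ?S = "Id_on X \<union> {(m,s)}"
    have "rp_morph X X ?R" "rp_morph X X ?S" unfolding rp_morph_def using assms m s by auto
    moreover have "rp_ae_eq X S ?R ?S" using assms m s by (subst rp_ae_eq_iff) auto
    ultimately have "rp_ae_eq X R ?R ?S" using ac unfolding rp_ac_def by blast
    then have "(m,s) \<in> ?R" using assms m s by (subst (asm) rp_ae_eq_iff) auto
    then show False using m s by auto
  qed
qed

lemma fs_val:
  assumes "finite X" "x' \<in> X"
  shows "fs_comp X (fs_pair X fs_id f) \<mu> u (x',y) = f x' y * \<mu> u x'"
proof -
  have inner: "fs_pair X fs_id f x (x',y) = (if x = x' then f x y else 0)" if x: "x \<in> X" for x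
  proof -
    have "fs_pair X fs_id f x (x',y) = (\<Sum>p\<in>X\<times>X. if p = (x,x) then fs_id x x' * f x y else 0)"
      unfolding fs_pair_def fs_comp_def
      by (rule sum.cong) (auto simp: fs_tensor_def fs_copy_def split: if_splits)
    also have "\<dots> = fs_id x x' * f x y" using x assms by simp
    finally show ?thesis by (simp add: fs_id_def)
  qed
  have "fs_comp X (fs_pair X fs_id f) \<mu> u (x',y) = (\<Sum>x\<in>X. if x = x' then f x y * \<mu> u x else 0)"
    unfolding fs_comp_def by (rule sum.cong) (auto simp: inner)
  also have "\<dots> = f x' y * \<mu> u x'" using assms by (simp add: sum.delta')
  finally show ?thesis .
qed

lemma fs_ae_eq_iff:
  assumes "finite X"
  shows "fs_ae_eq X Y \<mu> f g \<longleftrightarrow> (\<forall>x\<in>X. \<forall>y\<in>Y. f x y * \<mu> () x = g x y * \<mu> () x)"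
  unfolding fs_ae_eq_def by (simp add: fs_val[OF assms])

lemma part_fs:
  fixes X :: "'a set"
  assumes X: "finite X"
  shows "fs_ac X \<mu> \<nu> \<longleftrightarrow> (\<forall>x\<in>X. \<nu> () x = 0 \<longrightarrow> \<mu> () x = 0)"
proof
  assume h: "\<forall>x\<in>X. \<nu> () x = 0 \<longrightarrow> \<mu> () x = 0"
  show "fs_ac X \<mu> \<nu>" unfolding fs_ac_def fs_ae_eq_iff[OF X]
  proof (intro allI impI ballI)
    fix Y :: "nat set" and f g x y
    assume e: "\<forall>x\<in>X. \<forall>y\<in>Y. f x y * \<nu> () x = g x y * \<nu> () x" and x: "x \<in> X" and y: "y \<in> Y"
    show "f x y * \<mu> () x = g x y * \<mu> () x"
    proof (cases "\<nu> () x = 0")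
      case True then show ?thesis using h x by simp
    next
      case False then show ?thesis using e x y by (metis mult_cancel_right)
    qed
  qed
next
  assume ac: "fs_ac X \<mu> \<nu>"
  show "\<forall>x\<in>X. \<nu> () x = 0 \<longrightarrow> \<mu> () x = 0"
  proof (intro ballI impI)
    fix x0 assume x0: "x0 \<in> X" "\<nu> () x0 = 0"
    define f :: "'a \<Rightarrow> nat \<Rightarrow> real" where "f = (\<lambda>x y. if y = 0 then 1 else 0)"
    define g :: "'a \<Rightarrow> nat \<Rightarrow> real" where "g = (\<lambda>x y. if x = x0 then (if y = 1 then 1 else 0) else f x y)"
    have m: "fs_morph X {0,1} f" "fs_morph X {0,1} g" unfolding fs_morph_def f_def g_def by auto
    have "fs_ae_eq X {0,1} \<nu> f g" unfolding fs_ae_eq_iff[OF X] using x0 by (auto simp: g_def)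
    then have "fs_ae_eq X {0,1} \<mu> f g" using ac[unfolded fs_ac_def, rule_format, OF _ m] by simp
    then have "f x0 0 * \<mu> () x0 = g x0 0 * \<mu> () x0" unfolding fs_ae_eq_iff[OF X] using x0 by blast
    then show "\<mu> () x0 = 0" by (simp add: f_def g_def)
  qed
qed


definition KK :: "'a measure \<Rightarrow> ('a \<Rightarrow> 'b measure) \<Rightarrow> 'a \<Rightarrow> ('a \<times> 'b) measure" where
  "KK X f = (\<lambda>x. return X x \<Otimes>\<^sub>M f x)"

lemma KK_meas:
  assumes "f \<in> X \<rightarrow>\<^sub>M subprob_algebra Y"
  shows "KK X f \<in> X \<rightarrow>\<^sub>M subprob_algebra (X \<Otimes>\<^sub>M Y)"
  unfolding KK_def by (rule measurable_pair_measure[OF return_measurable assms])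

lemma bs_pair_eq:
  assumes f: "f \<in> X \<rightarrow>\<^sub>M subprob_algebra Y" and x: "x \<in> space X"
  shows "bs_pair X (bs_id X) f x = KK X f x"
proof -
  have "(\<lambda>z. return X (fst z) \<Otimes>\<^sub>M f (snd z)) \<in> (X \<Otimes>\<^sub>M X) \<rightarrow>\<^sub>M subprob_algebra (X \<Otimes>\<^sub>M Y)"
    by (intro measurable_pair_measure measurable_compose[OF measurable_fst return_measurable]
        measurable_compose[OF measurable_snd f])
  then have meas: "bs_tensor (return X) f \<in> (X \<Otimes>\<^sub>M X) \<rightarrow>\<^sub>M subprob_algebra (X \<Otimes>\<^sub>M Y)"
    unfolding bs_tensor_def by (simp add: case_prod_beta')
  show ?thesis
    unfolding bs_pair_def bs_comp_def bs_copy_def bs_id_def KK_def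
    by (subst bind_return[OF meas]) (auto simp: space_pair_measure x bs_tensor_def)
qed

lemma KK_integral:
  assumes f: "f \<in> X \<rightarrow>\<^sub>M subprob_algebra Y" and x: "x \<in> space X"
    and F: "F \<in> borel_measurable (X \<Otimes>\<^sub>M Y)"
  shows "(\<integral>\<^sup>+z. F z \<partial>KK X f x) = (\<integral>\<^sup>+y. F (x, y) \<partial>f x)"
proof -
  interpret sigma_finite_measure "f x"
    using subprob_space_imp_sigma_finite[OF subprob_space_kernel[OF f x]] .
  have sk: "sets (f x) = sets Y" using sets_kernel[OF f x] .
  have s: "sets (return X x \<Otimes>\<^sub>M f x) = sets (X \<Otimes>\<^sub>M Y)"
    by (intro sets_pair_measure_cong) (auto simp: sk)
  have F': "F \<in> borel_measurable (return X x \<Otimes>\<^sub>M f x)"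
    using F by (simp add: measurable_cong_sets[OF s refl])
  have F'': "F \<in> borel_measurable (X \<Otimes>\<^sub>M f x)"
    using F by (simp add: measurable_cong_sets[OF sets_pair_measure_cong[OF refl sk] refl])
  have "(\<integral>\<^sup>+z. F z \<partial>KK X f x) = (\<integral>\<^sup>+a. \<integral>\<^sup>+b. F (a, b) \<partial>f x \<partial>return X x)"
    unfolding KK_def by (rule nn_integral_fst[OF F', symmetric])
  also have "\<dots> = (\<integral>\<^sup>+b. F (x, b) \<partial>f x)"
    by (rule nn_integral_return[OF x borel_measurable_nn_integral_fst[OF F'']])
  finally show ?thesis .
qed

lemma bind_density_KK:
  assumes nu: "prob_space \<nu>" "sets \<nu> = sets X"
    and h: "h \<in> borel_measurable X"
    and f: "f \<in> X \<rightarrow>\<^sub>M subprob_algebra Y"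
  shows "density \<nu> h \<bind> KK X f = density (\<nu> \<bind> KK X f) (\<lambda>z. h (fst z))"
proof -
  have sp: "space \<nu> = space X" using nu(2) by (rule sets_eq_imp_space_eq)
  have ne: "space \<nu> \<noteq> {}" using prob_space.not_empty[OF nu(1)] .
  have K1: "KK X f \<in> \<nu> \<rightarrow>\<^sub>M subprob_algebra (X \<Otimes>\<^sub>M Y)"
    using KK_meas[OF f] by (simp add: measurable_cong_sets[OF nu(2) refl])
  have K2: "KK X f \<in> density \<nu> h \<rightarrow>\<^sub>M subprob_algebra (X \<Otimes>\<^sub>M Y)"
    using K1 by (simp add: measurable_cong_sets[OF sets_density refl])
  have hnu: "h \<in> borel_measurable \<nu>" using h by (simp add: measurable_cong_sets[OF nu(2) refl])
  have sets1: "sets (density \<nu> h \<bind> KK X f) = sets (X \<Otimes>\<^sub>M Y)"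
    by (rule sets_bind[OF sets_kernel[OF K2]]) (use ne in simp_all)
  have sets2: "sets (\<nu> \<bind> KK X f) = sets (X \<Otimes>\<^sub>M Y)"
    by (rule sets_bind[OF sets_kernel[OF K1] ne])
  have hfst: "(\<lambda>z. h (fst z)) \<in> borel_measurable (X \<Otimes>\<^sub>M Y)" using h by measurable
  show ?thesis
  proof (rule measure_eqI)
    show "sets (density \<nu> h \<bind> KK X f) = sets (density (\<nu> \<bind> KK X f) (\<lambda>z. h (fst z)))"
      using sets1 sets2 by simp
    fix C assume "C \<in> sets (density \<nu> h \<bind> KK X f)"
    then have C: "C \<in> sets (X \<Otimes>\<^sub>M Y)" using sets1 by simp
    have pt: "(\<integral>\<^sup>+z. h (fst z) * indicator C z \<partial>KK X f x) = h x * emeasure (KK X f x) C"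
      if x: "x \<in> space X" for x
    proof -
      have "(\<integral>\<^sup>+z. h (fst z) * indicator C z \<partial>KK X f x) = (\<integral>\<^sup>+y. h x * indicator C (x, y) \<partial>f x)"
        using KK_integral[OF f x, where F="\<lambda>z. h (fst z) * indicator C z"] hfst C by simp
      also have "\<dots> = h x * (\<integral>\<^sup>+y. indicator C (x, y) \<partial>f x)"
      proof (rule nn_integral_cmult)
        have "(\<lambda>y. indicator C (x, y)) \<in> borel_measurable Y" using C x by measurable
        then show "(\<lambda>y. indicator C (x, y)) \<in> borel_measurable (f x)"
          by (simp add: measurable_cong_sets[OF sets_kernel[OF f x] refl])
      qed
      also have "(\<integral>\<^sup>+y. indicator C (x, y) \<partial>f x) = (\<integral>\<^sup>+z. indicator C z \<partial>KK X f x)"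
        using KK_integral[OF f x, where F="indicator C"] C by simp
      also have "\<dots> = emeasure (KK X f x) C"
        using C sets_kernel[OF KK_meas[OF f] x] by simp
      finally show ?thesis .
    qed
    have "emeasure (density \<nu> h \<bind> KK X f) C = (\<integral>\<^sup>+x. emeasure (KK X f x) C \<partial>density \<nu> h)"
      by (rule emeasure_bind[OF _ K2 C]) (use ne in simp)
    also have "\<dots> = (\<integral>\<^sup>+x. h x * emeasure (KK X f x) C \<partial>\<nu>)"
      by (rule nn_integral_density[OF hnu]) (use K1 C in measurable)
    also have "\<dots> = (\<integral>\<^sup>+x. \<integral>\<^sup>+z. h (fst z) * indicator C z \<partial>KK X f x \<partial>\<nu>)"
      by (rule nn_integral_cong) (simp add: pt sp)
    also have "\<dots> = (\<integral>\<^sup>+z. h (fst z) * indicator C z \<partial>(\<nu> \<bind> KK X f))"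
      by (rule nn_integral_bind[OF _ K1, symmetric]) (use hfst C in measurable)
    also have "\<dots> = emeasure (density (\<nu> \<bind> KK X f) (\<lambda>z. h (fst z))) C"
      by (rule emeasure_density[symmetric]) (use hfst C sets2 in \<open>simp_all add: measurable_cong_sets[OF sets2 refl]\<close>)
    finally show "emeasure (density \<nu> h \<bind> KK X f) C = emeasure (density (\<nu> \<bind> KK X f) (\<lambda>z. h (fst z))) C" .
  qed
qed

lemma standard_borel_real: "standard_borel (borel :: real measure)"
  unfolding standard_borel_def
proof (intro exI[of _ euclideanreal] conjI)
  show "completely_metrizable_space (euclideanreal)" by (rule completely_metrizable_space_euclidean)
  show "separable_space euclideanreal"
    unfolding separable_space_def by (intro exI[of _ "\<rat>"]) (auto simp: countable_rat Rats_closure_real)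
qed (auto simp: sets_borel)

lemma bind_pair_eq:
  assumes "sets \<nu> = sets X" and f: "f \<in> X \<rightarrow>\<^sub>M subprob_algebra Y"
  shows "\<nu> \<bind> bs_pair X (bs_id X) f = \<nu> \<bind> KK X f"
  using assms sets_eq_imp_space_eq[OF assms(1)] by (intro bind_cong refl) (simp add: bs_pair_eq)

lemma part_bs:
  fixes X :: "'b measure"
  assumes mu: "bs_state X \<mu>" and nu: "bs_state X \<nu>"
  shows "bs_ac X \<mu> \<nu> \<longleftrightarrow> (\<forall>A\<in>sets X. emeasure \<nu> A = 0 \<longrightarrow> emeasure \<mu> A = 0)"
proof -
  have smu: "sets \<mu> = sets X" "prob_space \<mu>" using mu by (auto simp: bs_state_def space_prob_algebra)
  have snu: "sets \<nu> = sets X" "prob_space \<nu>" using nu by (auto simp: bs_state_def space_prob_algebra)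
  show ?thesis
  proof
    assume H: "\<forall>A\<in>sets X. emeasure \<nu> A = 0 \<longrightarrow> emeasure \<mu> A = 0"
    have ac: "absolutely_continuous \<nu> \<mu>"
      unfolding absolutely_continuous_def null_sets_def using H smu snu by auto
    interpret sigma_finite_measure \<nu> using prob_space_imp_sigma_finite[OF snu(2)] .
    obtain h where h: "h \<in> borel_measurable \<nu>" and dh: "density \<nu> h = \<mu>"
      using Radon_Nikodym[OF ac] smu snu by auto
    have hX: "h \<in> borel_measurable X" using h by (simp add: measurable_cong_sets[OF snu(1) refl])
    show "bs_ac X \<mu> \<nu>"
      unfolding bs_ac_def
    proof (intro allI impI)
      fix Y :: "real measure" and f g
      assume f: "bs_morph X Y f" and g: "bs_morph X Y g" and e: "bs_ae_eq X \<nu> f g"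
      have f': "f \<in> X \<rightarrow>\<^sub>M subprob_algebra Y" and g': "g \<in> X \<rightarrow>\<^sub>M subprob_algebra Y"
        using f g by (auto simp: bs_morph_def intro: measurable_prob_algebraD)
      have e': "\<nu> \<bind> KK X f = \<nu> \<bind> KK X g"
        using e unfolding bs_ae_eq_def bind_pair_eq[OF snu(1) f'] bind_pair_eq[OF snu(1) g'] .
      have "\<mu> \<bind> KK X f = \<mu> \<bind> KK X g"
        unfolding dh[symmetric] bind_density_KK[OF snu(2) snu(1) hX f'] bind_density_KK[OF snu(2) snu(1) hX g'] e' ..
      then show "bs_ae_eq X \<mu> f g"
        unfolding bs_ae_eq_def bind_pair_eq[OF smu(1) f'] bind_pair_eq[OF smu(1) g'] .
    qed
  next
    assume ac: "bs_ac X \<mu> \<nu>"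
    show "\<forall>A\<in>sets X. emeasure \<nu> A = 0 \<longrightarrow> emeasure \<mu> A = 0"
    proof (intro ballI impI)
      fix A assume A: "A \<in> sets X" and nA: "emeasure \<nu> A = 0"
      define f :: "'b \<Rightarrow> real measure" where "f = (\<lambda>x. return borel 0)"
      define g :: "'b \<Rightarrow> real measure" where "g = (\<lambda>x. return borel (indicator A x))"
      have fm: "f \<in> X \<rightarrow>\<^sub>M prob_algebra borel" unfolding f_def
        by (rule measurable_const) (simp add: space_prob_algebra prob_space_return)
      have gm: "g \<in> X \<rightarrow>\<^sub>M prob_algebra borel" unfolding g_def
        by (rule measurable_compose[OF _ measurable_return_prob_space]) (use A in measurable)
      have f': "f \<in> X \<rightarrow>\<^sub>M subprob_algebra borel" and g': "g \<in> X \<rightarrow>\<^sub>M subprob_algebra borel"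
        using fm gm by (auto intro: measurable_prob_algebraD)
      have K1: "KK X f \<in> \<nu> \<rightarrow>\<^sub>M subprob_algebra (X \<Otimes>\<^sub>M borel)"
        using KK_meas[OF f'] by (simp add: measurable_cong_sets[OF snu(1) refl])
      have K2: "KK X g \<in> \<nu> \<rightarrow>\<^sub>M subprob_algebra (X \<Otimes>\<^sub>M borel)"
        using KK_meas[OF g'] by (simp add: measurable_cong_sets[OF snu(1) refl])
      have "A \<in> null_sets \<nu>" using A nA snu by (simp add: null_sets_def)
      then have "AE x in \<nu>. x \<notin> A" by (rule AE_not_in)
      then have "AE x in \<nu>. KK X f x = KK X g x"
        by (rule eventually_mono) (simp add: KK_def f_def g_def)
      then have "\<nu> \<bind> KK X f = \<nu> \<bind> KK X g"
        by (rule bind_cong_AE[OF refl K1 K2])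
      then have "bs_ae_eq X \<nu> f g"
        unfolding bs_ae_eq_def bind_pair_eq[OF snu(1) f'] bind_pair_eq[OF snu(1) g'] .
      then have "bs_ae_eq X \<mu> f g"
        using ac standard_borel_real fm gm unfolding bs_ac_def bs_morph_def by blast
      then have eq: "\<mu> \<bind> KK X f = \<mu> \<bind> KK X g"
        unfolding bs_ae_eq_def bind_pair_eq[OF smu(1) f'] bind_pair_eq[OF smu(1) g'] .
      have L1: "KK X f \<in> \<mu> \<rightarrow>\<^sub>M subprob_algebra (X \<Otimes>\<^sub>M borel)"
        using KK_meas[OF f'] by (simp add: measurable_cong_sets[OF smu(1) refl])
      have L2: "KK X g \<in> \<mu> \<rightarrow>\<^sub>M subprob_algebra (X \<Otimes>\<^sub>M borel)"
        using KK_meas[OF g'] by (simp add: measurable_cong_sets[OF smu(1) refl])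
      have ne: "space \<mu> \<noteq> {}" using prob_space.not_empty[OF smu(2)] .
      have spm: "space \<mu> = space X" using sets_eq_imp_space_eq[OF smu(1)] .
      let ?C = "space X \<times> {1::real}"
      have C: "?C \<in> sets (X \<Otimes>\<^sub>M borel)" by (intro pair_measureI) auto
      have KC: "emeasure (return X x \<Otimes>\<^sub>M return borel c) ?C = indicator {1} c"
        if "x \<in> space X" for c x
      proof -
        interpret sigma_finite_measure "return borel c"
          by (rule prob_space_imp_sigma_finite[OF prob_space_return]) simp
        show ?thesis using that by (subst emeasure_pair_measure_Times) auto
      qed
      have "emeasure (\<mu> \<bind> KK X f) ?C = (\<integral>\<^sup>+x. emeasure (KK X f x) ?C \<partial>\<mu>)"
        by (rule emeasure_bind[OF ne L1 C])
      also have "\<dots> = (\<integral>\<^sup>+x. 0 \<partial>\<mu>)"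
        by (rule nn_integral_cong) (simp add: spm KC KK_def f_def)
      finally have z: "emeasure (\<mu> \<bind> KK X f) ?C = 0" by simp
      have "emeasure (\<mu> \<bind> KK X g) ?C = (\<integral>\<^sup>+x. emeasure (KK X g x) ?C \<partial>\<mu>)"
        by (rule emeasure_bind[OF ne L2 C])
      also have "\<dots> = (\<integral>\<^sup>+x. indicator A x \<partial>\<mu>)"
      proof (rule nn_integral_cong)
        fix x assume "x \<in> space \<mu>"
        then have "emeasure (KK X g x) ?C = indicator {1} (indicator A x :: real)"
          unfolding KK_def g_def by (intro KC) (simp add: spm)
        then show "emeasure (KK X g x) ?C = indicator A x"
          by (simp add: indicator_def)
      qed
      also have "\<dots> = emeasure \<mu> A" using A smu by simp
      finally show "emeasure \<mu> A = 0" using z eq by simp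
    qed
  qed
qed


no_notation Inner_Product.inner (infix "\<bullet>" 70)
no_notation Finite_Cartesian_Product.vec_nth (infixl "$" 90)

fun spn :: "nat \<Rightarrow> real vec list \<Rightarrow> real vec set" where
  "spn n [] = {0\<^sub>v n}"
| "spn n (c # cs) = {a \<cdot>\<^sub>v c + u | a u. u \<in> spn n cs}"

lemma spn_carrier: "set cs \<subseteq> carrier_vec n \<Longrightarrow> u \<in> spn n cs \<Longrightarrow> u \<in> carrier_vec n"
  by (induction cs arbitrary: u) auto

lemma spn_orth:
  assumes "set cs \<subseteq> carrier_vec n" "r \<in> carrier_vec n" "\<forall>c\<in>set cs. r \<bullet> c = 0"
  shows "u \<in> spn n cs \<Longrightarrow> r \<bullet> u = 0"
  using assms
proof (induction cs arbitrary: u)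
  case Nil then show ?case by simp
next
  case (Cons c cs)
  then obtain a v where u: "u = a \<cdot>\<^sub>v c + v" and v: "v \<in> spn n cs" by auto
  have vc: "v \<in> carrier_vec n" using spn_carrier[OF _ v] Cons.prems by auto
  have "r \<bullet> u = r \<bullet> (a \<cdot>\<^sub>v c) + r \<bullet> v"
    unfolding u using Cons.prems vc by (intro scalar_prod_add_distrib[of _ n]) auto
  also have "\<dots> = 0" using Cons vc v by simp
  finally show ?case .
qed

lemma spn_lin:
  assumes "set cs \<subseteq> carrier_vec n"
  shows "u \<in> spn n cs \<Longrightarrow> u' \<in> spn n cs \<Longrightarrow> u + \<beta> \<cdot>\<^sub>v u' \<in> spn n cs"
  using assms
proof (induction cs arbitrary: u u')
  case Nil then show ?case by (auto intro!: eq_vecI)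
next
  case (Cons c cs)
  then obtain a v a' v' where u: "u = a \<cdot>\<^sub>v c + v" and v: "v \<in> spn n cs"
    and u': "u' = a' \<cdot>\<^sub>v c + v'" and v': "v' \<in> spn n cs" by auto
  have vc: "v \<in> carrier_vec n" "v' \<in> carrier_vec n" "c \<in> carrier_vec n"
    using spn_carrier[OF _ v] spn_carrier[OF _ v'] Cons.prems by auto
  have "u + \<beta> \<cdot>\<^sub>v u' = (a + \<beta> * a') \<cdot>\<^sub>v c + (v + \<beta> \<cdot>\<^sub>v v')"
    unfolding u u' using vc by (intro eq_vecI) (auto simp: algebra_simps)
  moreover have "v + \<beta> \<cdot>\<^sub>v v' \<in> spn n cs" using Cons v v' by auto
  ultimately show ?case by auto
qed

lemma proj_exists:
  assumes "set cs \<subseteq> carrier_vec n"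
  shows "w \<in> carrier_vec n \<Longrightarrow> \<exists>r\<in>carrier_vec n. (\<forall>c\<in>set cs. r \<bullet> c = 0) \<and> w - r \<in> spn n cs"
  using assms
proof (induction cs arbitrary: w)
  case Nil
  then show ?case by (intro bexI[of _ w]) (auto intro!: eq_vecI)
next
  case (Cons c cs)
  have cs: "set cs \<subseteq> carrier_vec n" and c: "c \<in> carrier_vec n" using Cons.prems by auto
  obtain rw where rw: "rw \<in> carrier_vec n" "\<forall>c\<in>set cs. rw \<bullet> c = 0" "w - rw \<in> spn n cs"
    using Cons.IH[OF Cons.prems(1) cs] by blast
  obtain rc where rc: "rc \<in> carrier_vec n" "\<forall>c\<in>set cs. rc \<bullet> c = 0" "c - rc \<in> spn n cs"
    using Cons.IH[OF c cs] by blast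
  have w: "w \<in> carrier_vec n" by fact
  have ceq: "c = (c - rc) + rc" using c rc(1) by (intro eq_vecI) auto
  show ?case
  proof (cases "rc \<bullet> rc = 0")
    case True
    have "rw \<bullet> c = rw \<bullet> (c - rc) + rw \<bullet> rc"
      using c rc(1) rw(1) by (subst ceq) (intro scalar_prod_add_distrib[of _ n], auto)
    also have "rw \<bullet> (c - rc) = 0" by (rule spn_orth[OF cs rw(1,2) rc(3)])
    also have "rc = 0\<^sub>v n"
    proof (rule eq_vecI)
      fix i assume "i < dim_vec (0\<^sub>v n :: real vec)"
      then have i: "i < n" by simp
      have "(\<Sum>j\<in>{0..<n}. rc $ j * rc $ j) = 0" using True rc(1) by (simp add: scalar_prod_def)
      then have "\<forall>j\<in>{0..<n}. rc $ j * rc $ j = 0"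
        by (subst (asm) sum_nonneg_eq_0_iff) auto
      then show "rc $ i = 0\<^sub>v n $ i" using i by auto
    qed (use rc(1) in auto)
    finally have "rw \<bullet> c = 0" using rw(1) by simp
    moreover have "w - rw = 0 \<cdot>\<^sub>v c + (w - rw)" using w rw(1) c by (intro eq_vecI) auto
    ultimately show ?thesis using rw by (intro bexI[of _ rw]) force+
  next
    case False
    define \<alpha> where "\<alpha> = (rw \<bullet> rc) / (rc \<bullet> rc)"
    define r where "r = rw - \<alpha> \<cdot>\<^sub>v rc"
    have r: "r \<in> carrier_vec n" using rw rc unfolding r_def by auto
    have orth: "\<forall>c'\<in>set cs. r \<bullet> c' = 0"
    proof
      fix c' assume c': "c' \<in> set cs"
      then have "c' \<in> carrier_vec n" using cs by auto
      then have "r \<bullet> c' = rw \<bullet> c' - (\<alpha> \<cdot>\<^sub>v rc) \<bullet> c'" unfolding r_def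
        using rw(1) rc(1) by (intro minus_scalar_prod_distrib) auto
      then show "r \<bullet> c' = 0" using rw(2) rc(2) c' \<open>c' \<in> carrier_vec n\<close> rc(1) by simp
    qed
    have "r \<bullet> rc = rw \<bullet> rc - (\<alpha> \<cdot>\<^sub>v rc) \<bullet> rc" unfolding r_def
      using rw(1) rc(1) by (intro minus_scalar_prod_distrib) auto
    also have "\<dots> = 0" using False rc(1) by (simp add: \<alpha>_def)
    finally have rrc: "r \<bullet> rc = 0" .
    have "r \<bullet> c = r \<bullet> (c - rc) + r \<bullet> rc"
      using c rc(1) r by (subst ceq) (intro scalar_prod_add_distrib[of _ n], auto)
    also have "r \<bullet> (c - rc) = 0" by (rule spn_orth[OF cs r orth rc(3)])
    finally have rc0: "r \<bullet> c = 0" using rrc by simp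
    have "w - r = \<alpha> \<cdot>\<^sub>v c + ((w - rw) + (- \<alpha>) \<cdot>\<^sub>v (c - rc))"
      unfolding r_def using w rw(1) rc(1) c by (intro eq_vecI) (auto simp: algebra_simps)
    moreover have "(w - rw) + (- \<alpha>) \<cdot>\<^sub>v (c - rc) \<in> spn n cs"
      by (rule spn_lin[OF cs rw(3) rc(3)])
    ultimately have "w - r \<in> spn n (c # cs)" by auto
    then show ?thesis using r orth rc0 by (intro bexI[of _ r]) auto
  qed
qed

lemma spn_cols:
  fixes S :: "real mat"
  assumes S: "S \<in> carrier_mat n n"
  shows "set js \<subseteq> {..<n} \<Longrightarrow> u \<in> spn n (map (col S) js) \<Longrightarrow> \<exists>v\<in>carrier_vec n. u = S *\<^sub>v v"
proof (induction js arbitrary: u)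
  case Nil
  then show ?case using S by (intro bexI[of _ "0\<^sub>v n"]) (auto intro!: eq_vecI)
next
  case (Cons j js)
  then obtain a u' where u: "u = a \<cdot>\<^sub>v col S j + u'" and u': "u' \<in> spn n (map (col S) js)" by auto
  obtain v' where v': "v' \<in> carrier_vec n" "u' = S *\<^sub>v v'" using Cons u' by auto
  have j: "j < n" using Cons by auto
  have "u = S *\<^sub>v (a \<cdot>\<^sub>v unit_vec n j + v')"
    unfolding u v'(2) using S v'(1) j
    by (intro eq_vecI) (auto simp: scalar_prod_add_distrib[of _ n] algebra_simps)
  then show ?case using v'(1) by auto
qed

lemma LA:
  fixes S :: "real mat"
  assumes S: "S \<in> carrier_mat n n" and w: "w \<in> carrier_vec n"
    and nw: "\<forall>v\<in>carrier_vec n. w \<noteq> S *\<^sub>v v"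
  shows "\<exists>d\<in>carrier_vec n. (\<forall>u\<in>carrier_vec n. d \<bullet> (S *\<^sub>v u) = 0) \<and> d \<bullet> w \<noteq> 0"
proof -
  let ?cs = "map (col S) [0..<n]"
  have cs: "set ?cs \<subseteq> carrier_vec n" using S by auto
  obtain r where r: "r \<in> carrier_vec n" "\<forall>c\<in>set ?cs. r \<bullet> c = 0" "w - r \<in> spn n ?cs"
    using proj_exists[OF cs w] by blast
  have T0: "transpose_mat S *\<^sub>v r = 0\<^sub>v n"
  proof (rule eq_vecI)
    fix i assume "i < dim_vec (0\<^sub>v n :: real vec)"
    then have i: "i < n" by simp
    have "col S i \<bullet> r = 0" using r(2) i comm_scalar_prod[of r n "col S i"] r(1) S by auto
    then show "(transpose_mat S *\<^sub>v r) $ i = 0\<^sub>v n $ i" using i S by simp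
  qed (use S in simp)
  have orth: "\<forall>u\<in>carrier_vec n. r \<bullet> (S *\<^sub>v u) = 0"
  proof
    fix u :: "real vec" assume u: "u \<in> carrier_vec n"
    have "r \<bullet> (S *\<^sub>v u) = (transpose_mat S *\<^sub>v r) \<bullet> u"
      by (rule transpose_vec_mult_scalar[symmetric, OF S u r(1)])
    then show "r \<bullet> (S *\<^sub>v u) = 0" using T0 u by simp
  qed
  obtain v where v: "v \<in> carrier_vec n" "w - r = S *\<^sub>v v" using spn_cols[OF S _ r(3)] by (auto simp: atLeast0LessThan)
  have rne: "r \<noteq> 0\<^sub>v n"
  proof
    assume "r = 0\<^sub>v n"
    then have "w = S *\<^sub>v v" using v w by (metis minus_zero_vec)
    then show False using nw v by auto
  qed
  have "r \<bullet> r \<noteq> 0"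
  proof
    assume "r \<bullet> r = 0"
    then have "(\<Sum>j\<in>{0..<n}. r $ j * r $ j) = 0" using r(1) by (simp add: scalar_prod_def)
    then have "\<forall>j\<in>{0..<n}. r $ j * r $ j = 0"
      by (subst (asm) sum_nonneg_eq_0_iff) auto
    then have "r = 0\<^sub>v n" using r(1) by (intro eq_vecI) auto
    then show False using rne by simp
  qed
  moreover have "r \<bullet> w = r \<bullet> (w - r) + r \<bullet> r"
  proof -
    have "w = (w - r) + r" using w r(1) by (intro eq_vecI) auto
    then have "r \<bullet> w = r \<bullet> ((w - r) + r)" by simp
    also have "\<dots> = r \<bullet> (w - r) + r \<bullet> r" using w r(1) by (intro scalar_prod_add_distrib[of _ n]) auto
    finally show ?thesis .
  qed
  moreover have "r \<bullet> (w - r) = 0" using orth v by simp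
  ultimately show ?thesis using r(1) orth by (intro bexI[of _ r]) auto
qed

lemma copy_blocks: "mat (n + n) n (\<lambda>(i, j). if i = j \<or> i = j + n then 1 else 0)
   = four_block_mat (1\<^sub>m n) (0\<^sub>m n 0) (1\<^sub>m n) (0\<^sub>m n 0 :: real mat)"
  by (rule eq_matI) auto

lemma g_pair_id:
  fixes Af Sf :: "real mat" and bf :: "real vec"
  assumes Af: "Af \<in> carrier_mat y n" and bf: "bf \<in> carrier_vec y" and Sf: "Sf \<in> carrier_mat y y"
  shows "g_pair n n y (g_id n) (Af, bf, Sf) =
    (four_block_mat (1\<^sub>m n) (0\<^sub>m n 0) Af (0\<^sub>m y 0), 0\<^sub>v n @\<^sub>v bf, four_block_mat (0\<^sub>m n n) (0\<^sub>m n y) (0\<^sub>m y n) Sf)"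
proof -
  let ?T = "four_block_mat (1\<^sub>m n) (0\<^sub>m n n) (0\<^sub>m y n) Af"
  have T: "?T \<in> carrier_mat (n + y) (n + n)" using Af by auto
  have 1: "?T * four_block_mat (1\<^sub>m n) (0\<^sub>m n 0) (1\<^sub>m n) (0\<^sub>m n 0) = four_block_mat (1\<^sub>m n) (0\<^sub>m n 0) Af (0\<^sub>m y 0)"
    by (subst mult_four_block_mat[of _ n n _ n _ y _ _ n _ 0]) (use Af in auto)
  have 2: "?T *\<^sub>v 0\<^sub>v (n + n) + (0\<^sub>v n @\<^sub>v bf) = 0\<^sub>v n @\<^sub>v bf"
    using T bf by (intro eq_vecI) (auto simp: mult_mat_vec_def scalar_prod_def)
  have 3: "?T * 0\<^sub>m (n + n) (n + n) * transpose_mat ?T + four_block_mat (0\<^sub>m n n) (0\<^sub>m n y) (0\<^sub>m y n) Sf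
     = four_block_mat (0\<^sub>m n n) (0\<^sub>m n y) (0\<^sub>m y n) Sf"
  proof -
    have "?T * 0\<^sub>m (n + n) (n + n) * transpose_mat ?T = 0\<^sub>m (n + y) (n + y)"
      using T by (simp add: right_mult_zero_mat[OF T] left_mult_zero_mat)
    then show ?thesis using Sf by simp
  qed
  show ?thesis
    unfolding g_pair_def g_tensor_def g_id_def g_copy_def g_comp_def copy_blocks
    using 1 2 3 by simp
qed

lemma g_comp_full:
  fixes Af Sf A S :: "real mat" and bf b :: "real vec"
  assumes Af: "Af \<in> carrier_mat y n" and bf: "bf \<in> carrier_vec y" and Sf: "Sf \<in> carrier_mat y y"
    and A: "A \<in> carrier_mat n 0" and b: "b \<in> carrier_vec n" and S: "S \<in> carrier_mat n n"
  shows "g_comp (g_pair n n y (g_id n) (Af, bf, Sf)) (A, b, S) =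
    (four_block_mat (1\<^sub>m n) (0\<^sub>m n 0) Af (0\<^sub>m y 0) * A, b @\<^sub>v (Af *\<^sub>v b + bf),
     four_block_mat S (S * transpose_mat Af) (Af * S) (Af * S * transpose_mat Af + Sf))"
proof -
  let ?L = "four_block_mat (1\<^sub>m n) (0\<^sub>m n 0) Af (0\<^sub>m y 0)"
  have L: "?L \<in> carrier_mat (n + y) n" using Af by auto
  have Lr: "?L = 1\<^sub>m n @\<^sub>r Af" unfolding append_rows_def using Af by simp
  have m: "?L *\<^sub>v b + (0\<^sub>v n @\<^sub>v bf) = b @\<^sub>v (Af *\<^sub>v b + bf)"
  proof -
    have "?L *\<^sub>v b = b @\<^sub>v (Af *\<^sub>v b)" unfolding Lr using Af b by (subst mat_mult_append[of _ n n _ y]) auto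
    then show ?thesis using Af b bf by (simp add: append_vec_add[of _ n _ _ y])
  qed
  have Sb: "S = four_block_mat S (0\<^sub>m n 0) (0\<^sub>m 0 n) (0\<^sub>m 0 0)" using S by (intro eq_matI) auto
  have "?L * S = ?L * four_block_mat S (0\<^sub>m n 0) (0\<^sub>m 0 n) (0\<^sub>m 0 0)"
    by (rule arg_cong[where f="\<lambda>M. ?L * M"], rule Sb)
  also have "\<dots> = four_block_mat S (0\<^sub>m n 0) (Af * S) (0\<^sub>m y 0)"
    by (subst mult_four_block_mat[of _ n n _ 0 _ y _ _ n _ 0]) (use Af S in auto)
  finally have LS: "?L * S = four_block_mat S (0\<^sub>m n 0) (Af * S) (0\<^sub>m y 0)" .
  have LT: "transpose_mat ?L = four_block_mat (1\<^sub>m n) (transpose_mat Af) (0\<^sub>m 0 n) (0\<^sub>m 0 y)"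
    by (subst transpose_four_block_mat[of _ n n _ 0 _ y]) (use Af in auto)
  have LSL: "?L * S * transpose_mat ?L = four_block_mat S (S * transpose_mat Af) (Af * S) (Af * S * transpose_mat Af)"
    unfolding LS LT
    by (subst mult_four_block_mat[of _ n n _ 0 _ y _ _ n _ y]) (use Af S in auto)
  have c: "?L * S * transpose_mat ?L + four_block_mat (0\<^sub>m n n) (0\<^sub>m n y) (0\<^sub>m y n) Sf
    = four_block_mat S (S * transpose_mat Af) (Af * S) (Af * S * transpose_mat Af + Sf)"
    unfolding LSL by (subst add_four_block_mat[of _ n n _ y _ y]) (use Af S Sf in auto)
  show ?thesis
    unfolding g_pair_id[OF Af bf Sf] g_comp_def using m c by simp
qed

lemma four_block_eq:
  fixes A A' B B' C C' D D' :: "'x::zero mat"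
  assumes "A \<in> carrier_mat ra ca" "A' \<in> carrier_mat ra ca"
    "B \<in> carrier_mat ra cb" "B' \<in> carrier_mat ra cb"
    "C \<in> carrier_mat rb ca" "C' \<in> carrier_mat rb ca"
    "D \<in> carrier_mat rb cb" "D' \<in> carrier_mat rb cb"
  shows "four_block_mat A B C D = four_block_mat A' B' C' D' \<longleftrightarrow> A = A' \<and> B = B' \<and> C = C' \<and> D = D'"
proof
  assume e: "four_block_mat A B C D = four_block_mat A' B' C' D'"
  have h: "four_block_mat A B C D $$ (i, j) = four_block_mat A' B' C' D' $$ (i, j)" for i j
    using e by simp
  have "A = A'"
  proof (rule eq_matI)
    fix i j assume "i < dim_row A'" "j < dim_col A'"
    then show "A $$ (i, j) = A' $$ (i, j)" using h[of i j] assms by auto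
  qed (use assms in auto)
  moreover have "B = B'"
  proof (rule eq_matI)
    fix i j assume "i < dim_row B'" "j < dim_col B'"
    then show "B $$ (i, j) = B' $$ (i, j)" using h[of i "j + ca"] assms by auto
  qed (use assms in auto)
  moreover have "C = C'"
  proof (rule eq_matI)
    fix i j assume "i < dim_row C'" "j < dim_col C'"
    then show "C $$ (i, j) = C' $$ (i, j)" using h[of "i + ra" j] assms by auto
  qed (use assms in auto)
  moreover have "D = D'"
  proof (rule eq_matI)
    fix i j assume "i < dim_row D'" "j < dim_col D'"
    then show "D $$ (i, j) = D' $$ (i, j)" using h[of "i + ra" "j + ca"] assms by auto
  qed (use assms in auto)
  ultimately show "A = A' \<and> B = B' \<and> C = C' \<and> D = D'" by simp
qed simp

lemma G_eq:
  fixes Af Ag Sf Sg A S :: "real mat" and bf bg b :: "real vec"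
  assumes Af: "Af \<in> carrier_mat y n" and bf: "bf \<in> carrier_vec y" and Sf: "Sf \<in> carrier_mat y y"
    and Ag: "Ag \<in> carrier_mat y n" and bg: "bg \<in> carrier_vec y" and Sg: "Sg \<in> carrier_mat y y"
    and A: "A \<in> carrier_mat n 0" and b: "b \<in> carrier_vec n" and S: "S \<in> carrier_mat n n"
    and sym: "transpose_mat S = S"
  shows "g_ae_eq n y (A, b, S) (Af, bf, Sf) (Ag, bg, Sg) \<longleftrightarrow>
     (Af *\<^sub>v b + bf = Ag *\<^sub>v b + bg \<and> Af * S = Ag * S \<and> Sf = Sg)"
proof -
  let ?Lf = "four_block_mat (1\<^sub>m n) (0\<^sub>m n 0) Af (0\<^sub>m y 0)"
  let ?Lg = "four_block_mat (1\<^sub>m n) (0\<^sub>m n 0) Ag (0\<^sub>m y 0)"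
  have LA: "?Lf * A = ?Lg * A" using Af Ag A by (intro eq_matI) auto
  have trf: "S * transpose_mat Af = transpose_mat (Af * S)"
    using transpose_mult[OF Af S] sym by simp
  have trg: "S * transpose_mat Ag = transpose_mat (Ag * S)"
    using transpose_mult[OF Ag S] sym by simp
  have quad: "Af * S * transpose_mat Af = Ag * S * transpose_mat Ag" if e: "Af * S = Ag * S"
  proof -
    have "Af * S * transpose_mat Af = Ag * S * transpose_mat Af" using e by simp
    also have "\<dots> = Ag * (S * transpose_mat Af)" using Ag S Af by (intro assoc_mult_mat[of _ y n _ n _ y]) auto
    also have "\<dots> = Ag * transpose_mat (Ag * S)" using trf e by simp
    also have "\<dots> = Ag * (S * transpose_mat Ag)" using trg by simp
    also have "\<dots> = Ag * S * transpose_mat Ag" using Ag S by (intro assoc_mult_mat[symmetric, of _ y n _ n _ y]) auto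
    finally show ?thesis .
  qed
  have cancel: "Sf = Sg" if "X + Sf = X + Sg" and "X \<in> carrier_mat y y" for X :: "real mat"
  proof (rule eq_matI)
    fix i j assume ij: "i < dim_row Sg" "j < dim_col Sg"
    have "X $$ (i, j) + Sf $$ (i, j) = X $$ (i, j) + Sg $$ (i, j)"
      using arg_cong[OF that(1), of "\<lambda>M. M $$ (i, j)"] ij that(2) Sf Sg by simp
    then show "Sf $$ (i, j) = Sg $$ (i, j)" by simp
  qed (use Sf Sg in auto)
  have fb: "four_block_mat S (S * transpose_mat Af) (Af * S) (Af * S * transpose_mat Af + Sf) =
            four_block_mat S (S * transpose_mat Ag) (Ag * S) (Ag * S * transpose_mat Ag + Sg)
        \<longleftrightarrow> (Af * S = Ag * S \<and> Sf = Sg)"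
  proof -
    have "four_block_mat S (S * transpose_mat Af) (Af * S) (Af * S * transpose_mat Af + Sf) =
            four_block_mat S (S * transpose_mat Ag) (Ag * S) (Ag * S * transpose_mat Ag + Sg)
       \<longleftrightarrow> (S * transpose_mat Af = S * transpose_mat Ag \<and> Af * S = Ag * S \<and>
            Af * S * transpose_mat Af + Sf = Ag * S * transpose_mat Ag + Sg)"
      by (subst four_block_eq[where ra=n and ca=n and cb=y and rb=y]) (use Af Ag S Sf Sg in auto)
    also have "\<dots> \<longleftrightarrow> (Af * S = Ag * S \<and> Sf = Sg)"
    proof
      assume h: "S * transpose_mat Af = S * transpose_mat Ag \<and> Af * S = Ag * S \<and>
            Af * S * transpose_mat Af + Sf = Ag * S * transpose_mat Ag + Sg"
      have q: "Af * S * transpose_mat Af = Ag * S * transpose_mat Ag" using quad h by blast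
      have "Ag * S * transpose_mat Ag + Sf = Ag * S * transpose_mat Ag + Sg" using h[unfolded q] by blast
      then have "Sf = Sg" by (rule cancel) (use Ag S in auto)
      then show "Af * S = Ag * S \<and> Sf = Sg" using h by simp
    next
      assume h: "Af * S = Ag * S \<and> Sf = Sg"
      then show "S * transpose_mat Af = S * transpose_mat Ag \<and> Af * S = Ag * S \<and>
            Af * S * transpose_mat Af + Sf = Ag * S * transpose_mat Ag + Sg"
        using quad trf trg by simp
    qed
    finally show ?thesis .
  qed
  show ?thesis
    unfolding g_ae_eq_def g_comp_full[OF Af bf Sf A b S] g_comp_full[OF Ag bg Sg A b S]
    using LA fb b by (simp add: append_vec_eq[of b n b])
qed

lemma mat_eq_vec:
  fixes P Q :: "real mat"
  assumes P: "P \<in> carrier_mat y n" and Q: "Q \<in> carrier_mat y n"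
    and h: "\<forall>v\<in>carrier_vec n. P *\<^sub>v v = Q *\<^sub>v v"
  shows "P = Q"
proof (rule eq_matI)
  fix i j assume ij: "i < dim_row Q" "j < dim_col Q"
  have "(P *\<^sub>v unit_vec n j) $ i = (Q *\<^sub>v unit_vec n j) $ i" using h by simp
  then show "P $$ (i, j) = Q $$ (i, j)" using ij P Q by simp
qed (use P Q in auto)

lemma expand:
  fixes Af S :: "real mat" and bf b v :: "real vec"
  assumes Af: "Af \<in> carrier_mat y n" and bf: "bf \<in> carrier_vec y" and b: "b \<in> carrier_vec n"
    and S: "S \<in> carrier_mat n n" and v: "v \<in> carrier_vec n"
  shows "Af *\<^sub>v (b + S *\<^sub>v v) + bf = (Af *\<^sub>v b + bf) + (Af * S) *\<^sub>v v"
proof -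
  have "Af *\<^sub>v (b + S *\<^sub>v v) = Af *\<^sub>v b + Af *\<^sub>v (S *\<^sub>v v)"
    using Af b S v by (intro mult_add_distrib_mat_vec[of _ y n]) auto
  also have "Af *\<^sub>v (S *\<^sub>v v) = (Af * S) *\<^sub>v v" using Af S v by simp
  finally show ?thesis using Af bf b S v by (intro eq_vecI) auto
qed

lemma cond_iff:
  fixes Af Ag S A :: "real mat" and bf bg b :: "real vec"
  assumes Af: "Af \<in> carrier_mat y n" and bf: "bf \<in> carrier_vec y"
    and Ag: "Ag \<in> carrier_mat y n" and bg: "bg \<in> carrier_vec y"
    and b: "b \<in> carrier_vec n" and S: "S \<in> carrier_mat n n"
  shows "(Af *\<^sub>v b + bf = Ag *\<^sub>v b + bg \<and> Af * S = Ag * S) \<longleftrightarrow>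
     (\<forall>w\<in>g_supp n (A, b, S). Af *\<^sub>v w + bf = Ag *\<^sub>v w + bg)"
proof
  assume h: "Af *\<^sub>v b + bf = Ag *\<^sub>v b + bg \<and> Af * S = Ag * S"
  show "\<forall>w\<in>g_supp n (A, b, S). Af *\<^sub>v w + bf = Ag *\<^sub>v w + bg"
    unfolding g_supp_def using h by (auto simp: expand[OF Af bf b S] expand[OF Ag bg b S])
next
  assume h: "\<forall>w\<in>g_supp n (A, b, S). Af *\<^sub>v w + bf = Ag *\<^sub>v w + bg"
  have e: "(Af *\<^sub>v b + bf) + (Af * S) *\<^sub>v v = (Ag *\<^sub>v b + bg) + (Ag * S) *\<^sub>v v" if v: "v \<in> carrier_vec n" for v
    using h v unfolding g_supp_def by (auto simp: expand[OF Af bf b S v, symmetric] expand[OF Ag bg b S v, symmetric])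
  have z: "(M * S) *\<^sub>v 0\<^sub>v n = 0\<^sub>v y" if "M \<in> carrier_mat y n" for M :: "real mat"
    using that S by (intro eq_vecI) (auto simp: mult_mat_vec_def scalar_prod_def)
  have e0: "Af *\<^sub>v b + bf = Ag *\<^sub>v b + bg"
    using e[of "0\<^sub>v n"] z[OF Af] z[OF Ag] Af bf Ag bg b by simp
  have "Af * S = Ag * S"
  proof (rule mat_eq_vec[of _ y n])
    show "\<forall>v\<in>carrier_vec n. Af * S *\<^sub>v v = Ag * S *\<^sub>v v"
    proof
      fix v :: "real vec" assume v: "v \<in> carrier_vec n"
      have ev: "(Af *\<^sub>v b + bf) + (Af * S) *\<^sub>v v = (Af *\<^sub>v b + bf) + (Ag * S) *\<^sub>v v"
        using e[OF v] e0 by simp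
      show "Af * S *\<^sub>v v = Ag * S *\<^sub>v v"
      proof (rule eq_vecI)
        fix i assume i: "i < dim_vec (Ag * S *\<^sub>v v)"
        have "((Af *\<^sub>v b + bf) + (Af * S) *\<^sub>v v) $ i = ((Af *\<^sub>v b + bf) + (Ag * S) *\<^sub>v v) $ i"
          using ev by simp
        then show "(Af * S *\<^sub>v v) $ i = (Ag * S *\<^sub>v v) $ i" using i Af Ag S bf b by simp
      qed (use Af Ag S in simp)
    qed
  qed (use Af Ag S in auto)
  then show "Af *\<^sub>v b + bf = Ag *\<^sub>v b + bg \<and> Af * S = Ag * S" using e0 by simp
qed

lemma row_vec_mult:
  fixes d w :: "real vec"
  assumes d: "d \<in> carrier_vec n" and w: "w \<in> carrier_vec n"
  shows "mat 1 n (\<lambda>(i, j). d $ j) *\<^sub>v w = vec 1 (\<lambda>_. d \<bullet> w)"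
  using d w by (intro eq_vecI) (auto simp: mult_mat_vec_def scalar_prod_def)

lemma psd_zero1: "psd_mat 1 (0\<^sub>m 1 1 :: real mat)"
  unfolding psd_mat_def by (auto simp: mult_mat_vec_def scalar_prod_def)

lemma part_g:
  assumes mu: "g_morph 0 n \<mu>" and nu: "g_morph 0 n \<nu>"
  shows "g_ac n \<mu> \<nu> \<longleftrightarrow> g_supp n \<mu> \<subseteq> g_supp n \<nu>"
proof -
  obtain A1 b1 S1 where m: "\<mu> = (A1, b1, S1)" by (cases \<mu>) auto
  obtain A2 b2 S2 where v: "\<nu> = (A2, b2, S2)" by (cases \<nu>) auto
  have A1: "A1 \<in> carrier_mat n 0" and b1: "b1 \<in> carrier_vec n" and S1: "S1 \<in> carrier_mat n n"
    and sym1: "transpose_mat S1 = S1"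
    using mu unfolding m g_morph_def psd_mat_def by auto
  have A2: "A2 \<in> carrier_mat n 0" and b2: "b2 \<in> carrier_vec n" and S2: "S2 \<in> carrier_mat n n"
    and sym2: "transpose_mat S2 = S2"
    using nu unfolding v g_morph_def psd_mat_def by auto
  show ?thesis
  proof
    assume sub: "g_supp n \<mu> \<subseteq> g_supp n \<nu>"
    show "g_ac n \<mu> \<nu>"
      unfolding g_ac_def
    proof (intro allI impI)
      fix y f g assume f: "g_morph n y f" and g: "g_morph n y g" and e: "g_ae_eq n y \<nu> f g"
      obtain Af bf Sf where ff: "f = (Af, bf, Sf)" by (cases f) auto
      obtain Ag bg Sg where gg: "g = (Ag, bg, Sg)" by (cases g) auto
      have Af: "Af \<in> carrier_mat y n" and bf: "bf \<in> carrier_vec y" and Sf: "Sf \<in> carrier_mat y y"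
        using f unfolding ff g_morph_def psd_mat_def by auto
      have Ag: "Ag \<in> carrier_mat y n" and bg: "bg \<in> carrier_vec y" and Sg: "Sg \<in> carrier_mat y y"
        using g unfolding gg g_morph_def psd_mat_def by auto
      note GE2 = G_eq[OF Af bf Sf Ag bg Sg A2 b2 S2 sym2]
      note GE1 = G_eq[OF Af bf Sf Ag bg Sg A1 b1 S1 sym1]
      note C2 = cond_iff[OF Af bf Ag bg b2 S2, of A2]
      note C1 = cond_iff[OF Af bf Ag bg b1 S1, of A1]
      have "(\<forall>w\<in>g_supp n (A2, b2, S2). Af *\<^sub>v w + bf = Ag *\<^sub>v w + bg) \<and> Sf = Sg"
        using e C2 unfolding v ff gg GE2 by blast
      then have "(\<forall>w\<in>g_supp n (A1, b1, S1). Af *\<^sub>v w + bf = Ag *\<^sub>v w + bg) \<and> Sf = Sg"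
        using sub unfolding m v by blast
      then show "g_ae_eq n y \<mu> f g"
        using C1 unfolding m ff gg GE1 by blast
    qed
  next
    assume ac: "g_ac n \<mu> \<nu>"
    show "g_supp n \<mu> \<subseteq> g_supp n \<nu>"
    proof (rule ccontr)
      assume "\<not> g_supp n \<mu> \<subseteq> g_supp n \<nu>"
      then obtain p where p1: "p \<in> g_supp n \<mu>" and p2: "p \<notin> g_supp n \<nu>" by blast
      obtain v1 where v1: "v1 \<in> carrier_vec n" "p = b1 + S1 *\<^sub>v v1" using p1 unfolding m g_supp_def by auto
      have p: "p \<in> carrier_vec n" using v1 b1 S1 by auto
      define w where "w = p - b2"
      have w: "w \<in> carrier_vec n" using p b2 unfolding w_def by auto
      have nw: "\<forall>u\<in>carrier_vec n. w \<noteq> S2 *\<^sub>v u"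
      proof (intro ballI notI)
        fix u assume u: "u \<in> carrier_vec n" and wu: "w = S2 *\<^sub>v u"
        have "p = b2 + S2 *\<^sub>v u" unfolding wu[symmetric] w_def using p b2 by (intro eq_vecI) auto
        then have "p \<in> g_supp n \<nu>" unfolding v g_supp_def using u by auto
        then show False using p2 by simp
      qed
      obtain d where d: "d \<in> carrier_vec n" "\<forall>u\<in>carrier_vec n. d \<bullet> (S2 *\<^sub>v u) = 0" "d \<bullet> w \<noteq> 0"
        using LA[OF S2 w nw] by blast
      define Af :: "real mat" where "Af = mat 1 n (\<lambda>(i, j). d $ j)"
      define bf :: "real vec" where "bf = vec 1 (\<lambda>_. - (d \<bullet> b2))"
      define Ag :: "real mat" where "Ag = 0\<^sub>m 1 n"
      define bg :: "real vec" where "bg = 0\<^sub>v 1"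
      have Af: "Af \<in> carrier_mat 1 n" and bf: "bf \<in> carrier_vec 1" and Ag: "Ag \<in> carrier_mat 1 n"
        and bg: "bg \<in> carrier_vec 1" and Z: "0\<^sub>m 1 1 \<in> carrier_mat 1 (1::nat)"
        unfolding Af_def bf_def Ag_def bg_def by auto
      have fm: "g_morph n 1 (Af, bf, 0\<^sub>m 1 1)" and gm: "g_morph n 1 (Ag, bg, 0\<^sub>m 1 1)"
        unfolding g_morph_def using Af bf Ag bg psd_zero1 by auto
      have ev: "Af *\<^sub>v x + bf = vec 1 (\<lambda>_. d \<bullet> x - d \<bullet> b2)" if "x \<in> carrier_vec n" for x
        using that d(1) unfolding Af_def bf_def by (subst row_vec_mult) (auto intro!: eq_vecI)
      have eg: "Ag *\<^sub>v x + bg = vec 1 (\<lambda>_. 0)" if "x \<in> carrier_vec n" for x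
        using that unfolding Ag_def bg_def by (intro eq_vecI) (auto simp: mult_mat_vec_def scalar_prod_def)
      note GE2 = G_eq[OF Af bf Z Ag bg Z A2 b2 S2 sym2]
      note GE1 = G_eq[OF Af bf Z Ag bg Z A1 b1 S1 sym1]
      note C2 = cond_iff[OF Af bf Ag bg b2 S2, of A2]
      note C1 = cond_iff[OF Af bf Ag bg b1 S1, of A1]
      have "\<forall>x\<in>g_supp n (A2, b2, S2). Af *\<^sub>v x + bf = Ag *\<^sub>v x + bg"
      proof
        fix x assume "x \<in> g_supp n (A2, b2, S2)"
        then obtain u where u: "u \<in> carrier_vec n" "x = b2 + S2 *\<^sub>v u" unfolding g_supp_def by auto
        have x: "x \<in> carrier_vec n" using u b2 S2 by auto
        have "d \<bullet> x = d \<bullet> b2 + d \<bullet> (S2 *\<^sub>v u)"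
          unfolding u(2) using d(1) b2 S2 u(1) by (intro scalar_prod_add_distrib[of _ n]) auto
        then have "d \<bullet> x - d \<bullet> b2 = 0" using d(2) u(1) by simp
        then show "Af *\<^sub>v x + bf = Ag *\<^sub>v x + bg" unfolding ev[OF x] eg[OF x] by simp
      qed
      then have "g_ae_eq n 1 \<nu> (Af, bf, 0\<^sub>m 1 1) (Ag, bg, 0\<^sub>m 1 1)"
        using C2 unfolding v GE2 by blast
      then have "g_ae_eq n 1 \<mu> (Af, bf, 0\<^sub>m 1 1) (Ag, bg, 0\<^sub>m 1 1)"
        using ac fm gm unfolding g_ac_def by blast
      then have "\<forall>x\<in>g_supp n (A1, b1, S1). Af *\<^sub>v x + bf = Ag *\<^sub>v x + bg"
        using C1 unfolding m GE1 by blast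
      then have "Af *\<^sub>v p + bf = Ag *\<^sub>v p + bg" using p1 unfolding m by blast
      then have "vec 1 (\<lambda>_. d \<bullet> p - d \<bullet> b2) = (vec 1 (\<lambda>_. 0) :: real vec)"
        unfolding ev[OF p] eg[OF p] .
      then have "(vec 1 (\<lambda>_. d \<bullet> p - d \<bullet> b2) :: real vec) $ 0 = (vec 1 (\<lambda>_. 0) :: real vec) $ 0"
        by (rule arg_cong)
      then have "d \<bullet> p - d \<bullet> b2 = 0" by simp
      moreover have "d \<bullet> w = d \<bullet> p - d \<bullet> b2"
        unfolding w_def using d(1) p b2 by (rule scalar_prod_minus_distrib)
      ultimately show False using d(3) by simp
    qed
  qed
qed

theorem proposition4p10:
  shows "(\<forall>(X::'a set) \<mu> \<nu>. finite X \<longrightarrow> fs_morph {()} X \<mu> \<longrightarrow> fs_morph {()} X \<nu> \<longrightarrow>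
            (fs_ac X \<mu> \<nu> \<longleftrightarrow> (\<forall>x\<in>X. \<nu> () x = 0 \<longrightarrow> \<mu> () x = 0)))
       \<and> (\<forall>(X::'b measure) \<mu> \<nu>. standard_borel X \<longrightarrow> bs_state X \<mu> \<longrightarrow> bs_state X \<nu> \<longrightarrow>
            (bs_ac X \<mu> \<nu> \<longleftrightarrow> (\<forall>A\<in>sets X. emeasure \<nu> A = 0 \<longrightarrow> emeasure \<mu> A = 0)))
       \<and> (\<forall>n \<mu> \<nu>. g_morph 0 n \<mu> \<longrightarrow> g_morph 0 n \<nu> \<longrightarrow>
            (g_ac n \<mu> \<nu> \<longleftrightarrow> g_supp n \<mu> \<subseteq> g_supp n \<nu>))
       \<and> (\<forall>(X::'c set) R S. R \<noteq> {} \<longrightarrow> R \<subseteq> X \<longrightarrow> S \<noteq> {} \<longrightarrow> S \<subseteq> X \<longrightarrow>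
            (rp_ac X R S \<longleftrightarrow> R \<subseteq> S))"
proof (intro conjI allI impI)
  fix X :: "'a set" and \<mu> \<nu> assume "finite X"
  then show "fs_ac X \<mu> \<nu> \<longleftrightarrow> (\<forall>x\<in>X. \<nu> () x = 0 \<longrightarrow> \<mu> () x = 0)" by (rule part_fs)
next
  fix X :: "'b measure" and \<mu> \<nu> assume "bs_state X \<mu>" "bs_state X \<nu>"
  then show "bs_ac X \<mu> \<nu> \<longleftrightarrow> (\<forall>A\<in>sets X. emeasure \<nu> A = 0 \<longrightarrow> emeasure \<mu> A = 0)" by (rule part_bs)
next
  fix n \<mu> \<nu> assume "g_morph 0 n \<mu>" "g_morph 0 n \<nu>"
  then show "g_ac n \<mu> \<nu> \<longleftrightarrow> g_supp n \<mu> \<subseteq> g_supp n \<nu>" by (rule part_g)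
next
  fix X :: "'c set" and R S assume "R \<noteq> {}" "R \<subseteq> X" "S \<noteq> {}" "S \<subseteq> X"
  then show "rp_ac X R S \<longleftrightarrow> R \<subseteq> S" by (rule part_rp)
qed

end
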